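(* For every tree $T$, $\operatorname{diam}(\mathcal{C}_3(T))$ equals the maximum of $\|h\|_1$ over all balanced labelings $h$ of $T$.
   Context: Let $T$ be a finite tree with vertex set $V$ and edge set $E$. A proper 3-coloring of $T$ is a map $f\colon V\to\mathbb{Z}/3\mathbb{Z}$ with $f(u)\neq f(v)$ for every edge $uv\in E$. The 3-coloring graph $\mathcal{C}_3(T)$ has the proper 3-colorings as vertices, two colorings adjacent iff they differ at exactly one vertex. A labeling of $T$ is a map $h\colon V\to\mathbb{Z}$ with $|h(u)-h(v)|\le 1$ for every edge $uv\in E$; $\|h\|_1=\sum_{v\in V}|h(v)|$, and $h+m$ denotes $v\mapsto h(v)+m$. A labeling $h$ is balanced if $\|h\|_1\le\|h+3m\|_1$ for all $m\in\mathbb{Z}$. *)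

theory Defs
  imports Main "HOL-Library.FuncSet" "HOL-Library.Extended_Nat"
begin

definition is_path :: "'a set \<Rightarrow> 'a set set \<Rightarrow> 'a list \<Rightarrow> bool" where
  "is_path V E ps \<longleftrightarrow> ps \<noteq> [] \<and> set ps \<subseteq> V \<and>
     (\<forall>i. i + 1 < length ps \<longrightarrow> {ps ! i, ps ! (i+1)} \<in> E)"

definition is_cycle :: "'a set \<Rightarrow> 'a set set \<Rightarrow> 'a list \<Rightarrow> bool" where
  "is_cycle V E cs \<longleftrightarrow> length cs \<ge> 3 \<and> distinct cs \<and> is_path V E cs \<and> {last cs, hd cs} \<in> E"

definition is_tree :: "'a set \<Rightarrow> 'a set set \<Rightarrow> bool" where
  "is_tree V E \<longleftrightarrow> finite V \<and> V \<noteq> {} \<and>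
     (\<forall>e\<in>E. \<exists>u v. e = {u, v} \<and> u \<in> V \<and> v \<in> V \<and> u \<noteq> v) \<and>
     (\<forall>u\<in>V. \<forall>v\<in>V. \<exists>ps. is_path V E ps \<and> hd ps = u \<and> last ps = v) \<and>
     (\<nexists>cs. is_cycle V E cs)"

text \<open>Proper 3-colourings, colours in Z/3Z represented by {0,1,2}; extensional outside V.\<close>
definition proper3 :: "'a set \<Rightarrow> 'a set set \<Rightarrow> ('a \<Rightarrow> nat) \<Rightarrow> bool" where
  "proper3 V E f \<longleftrightarrow> f \<in> V \<rightarrow>\<^sub>E {0, 1, 2} \<and> (\<forall>u v. {u, v} \<in> E \<longrightarrow> f u \<noteq> f v)"

definition cadj :: "'a set \<Rightarrow> ('a \<Rightarrow> nat) \<Rightarrow> ('a \<Rightarrow> nat) \<Rightarrow> bool" where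
  "cadj V f g \<longleftrightarrow> card {v \<in> V. f v \<noteq> g v} = 1"

definition cwalk :: "'a set \<Rightarrow> 'a set set \<Rightarrow> ('a \<Rightarrow> nat) list \<Rightarrow> bool" where
  "cwalk V E fs \<longleftrightarrow> fs \<noteq> [] \<and> (\<forall>f\<in>set fs. proper3 V E f) \<and>
     (\<forall>i. i + 1 < length fs \<longrightarrow> cadj V (fs ! i) (fs ! (i+1)))"

text \<open>Graph distance in C_3(T) (infinity if not connected).\<close>
definition cdist :: "'a set \<Rightarrow> 'a set set \<Rightarrow> ('a \<Rightarrow> nat) \<Rightarrow> ('a \<Rightarrow> nat) \<Rightarrow> enat" where
  "cdist V E f g = (INF fs \<in> {fs. cwalk V E fs \<and> hd fs = f \<and> last fs = g}. enat (length fs - 1))"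

definition cdiam :: "'a set \<Rightarrow> 'a set set \<Rightarrow> enat" where
  "cdiam V E = (SUP p \<in> {(f, g). proper3 V E f \<and> proper3 V E g}. cdist V E (fst p) (snd p))"

definition is_labeling :: "'a set set \<Rightarrow> ('a \<Rightarrow> int) \<Rightarrow> bool" where
  "is_labeling E h \<longleftrightarrow> (\<forall>u v. {u, v} \<in> E \<longrightarrow> \<bar>h u - h v\<bar> \<le> 1)"

definition l1norm :: "'a set \<Rightarrow> ('a \<Rightarrow> int) \<Rightarrow> int" where
  "l1norm V h = (\<Sum>v\<in>V. \<bar>h v\<bar>)"

definition balanced :: "'a set \<Rightarrow> ('a \<Rightarrow> int) \<Rightarrow> bool" where
  "balanced V h \<longleftrightarrow> (\<forall>m::int. l1norm V h \<le> l1norm V (\<lambda>v. h v + 3 * m))"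

end

theory Submission
  imports Defs
begin


lemma path_tl:
  assumes "is_path V E (x # xs)" "xs \<noteq> []"
  shows "is_path V E xs \<and> {x, hd xs} \<in> E"
proof -
  have "{(x#xs) ! 0, (x#xs) ! (0+1)} \<in> E" using assms unfolding is_path_def by (cases xs) auto
  moreover have "is_path V E xs" unfolding is_path_def
  proof (intro conjI allI impI)
    show "xs \<noteq> []" by fact
    show "set xs \<subseteq> V" using assms(1) unfolding is_path_def by auto
    fix i assume "i + 1 < length xs"
    hence "Suc i + 1 < length (x#xs)" by simp
    hence "{(x#xs) ! Suc i, (x#xs) ! (Suc i+1)} \<in> E" using assms(1) unfolding is_path_def by blast
    thus "{xs ! i, xs ! (i+1)} \<in> E" by simp
  qed
  ultimately show ?thesis using assms(2) by (cases xs) auto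
qed

lemma path_prop:
  "is_path V E ps \<Longrightarrow> (\<And>u v. {u,v} \<in> E \<Longrightarrow> P u \<Longrightarrow> P v) \<Longrightarrow> P (hd ps) \<Longrightarrow> P (last ps)"
proof (induction ps)
  case Nil then show ?case by (simp add: is_path_def)
next
  case (Cons x xs)
  show ?case
  proof (cases "xs = []")
    case True then show ?thesis using Cons by simp
  next
    case False
    from path_tl[OF Cons.prems(1) False] have "is_path V E xs" "{x, hd xs} \<in> E" by auto
    moreover have "P (hd xs)" using Cons.prems(2)[OF \<open>{x, hd xs} \<in> E\<close>] Cons.prems(3) by simp
    ultimately have "P (last xs)" using Cons.IH Cons.prems(2) by blast
    then show ?thesis using False by simp
  qed
qed

lemma tree_prop:
  assumes "is_tree V E" "\<And>u v. {u,v} \<in> E \<Longrightarrow> P u \<Longrightarrow> P v" "r \<in> V" "P r" "v \<in> V"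
  shows "P v"
proof -
  obtain ps where "is_path V E ps" "hd ps = r" "last ps = v" using assms unfolding is_tree_def by blast
  then show ?thesis using path_prop[of V E ps P] assms by blast
qed

lemma tree_edge:
  assumes "is_tree V E" "{u,v} \<in> E"
  shows "u \<in> V \<and> v \<in> V \<and> u \<noteq> v"
proof -
  obtain a b where "{u,v} = {a,b}" "a \<in> V" "b \<in> V" "a \<noteq> b" using assms unfolding is_tree_def by blast
  then show ?thesis by (auto simp: doubleton_eq_iff)
qed

lemma cycle_mono: "is_cycle V' E' cs \<Longrightarrow> V' \<subseteq> V \<Longrightarrow> E' \<subseteq> E \<Longrightarrow> is_cycle V E cs"
  unfolding is_cycle_def is_path_def by blast

lemma path_snoc:
  assumes "is_path V E ps" "w \<in> V" "{last ps, w} \<in> E"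
  shows "is_path V E (ps @ [w])"
  unfolding is_path_def
proof (intro conjI allI impI)
  show "ps @ [w] \<noteq> []" by simp
  show "set (ps @ [w]) \<subseteq> V" using assms unfolding is_path_def by auto
  fix i assume i: "i + 1 < length (ps @ [w])"
  show "{(ps @ [w]) ! i, (ps @ [w]) ! (i + 1)} \<in> E"
  proof (cases "i + 1 < length ps")
    case True then show ?thesis using assms(1) unfolding is_path_def by (simp add: nth_append)
  next
    case False
    hence "i = length ps - 1" using i by simp
    moreover have "ps \<noteq> []" using assms(1) unfolding is_path_def by simp
    ultimately show ?thesis using assms(3) by (simp add: nth_append last_conv_nth)
  qed
qed

lemma path_drop:
  assumes "is_path V E ps" "i < length ps"
  shows "is_path V E (drop i ps)"
  unfolding is_path_def
proof (intro conjI allI impI)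
  show "drop i ps \<noteq> []" using assms(2) by simp
  show "set (drop i ps) \<subseteq> V" using assms(1) unfolding is_path_def by (meson order_trans set_drop_subset)
  fix j assume "j + 1 < length (drop i ps)"
  hence "(i + j) + 1 < length ps" by simp
  hence "{ps ! (i+j), ps ! ((i + j) + 1)} \<in> E" using assms(1) unfolding is_path_def by blast
  thus "{drop i ps ! j, drop i ps ! (j + 1)} \<in> E" using assms(2) \<open>i + j + 1 < length ps\<close> by (simp add: add.assoc)
qed

lemma leaf_exists:
  assumes fin: "finite V" and ne: "V \<noteq> {}"
    and wf: "\<And>u v. {u,v} \<in> E \<Longrightarrow> u \<in> V \<and> v \<in> V \<and> u \<noteq> v"
    and nc: "\<nexists>cs. is_cycle V E cs"
  shows "\<exists>x\<in>V. \<forall>y z. {x,y} \<in> E \<longrightarrow> {x,z} \<in> E \<longrightarrow> y = z"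
proof -
  obtain v where v: "v \<in> V" using ne by blast
  let ?P = "\<lambda>ps. is_path V E ps \<and> distinct ps"
  have P0: "?P [v]" using v by (simp add: is_path_def)
  have bnd: "\<forall>ps. ?P ps \<longrightarrow> length ps < card V + 1"
  proof (intro allI impI)
    fix ps assume "?P ps"
    hence "card (set ps) = length ps" "set ps \<subseteq> V" by (auto simp: is_path_def distinct_card)
    thus "length ps < card V + 1" using card_mono[OF fin, of "set ps"] by simp
  qed
  obtain ps where ps: "?P ps" and mx: "\<forall>qs. ?P qs \<longrightarrow> length qs \<le> length ps"
    using ex_has_greatest_nat[of ?P "[v]" length "card V + 1", OF P0 bnd] by metis
  have psne: "ps \<noteq> []" using ps by (simp add: is_path_def)
  have key: "w = ps ! (length ps - 2) \<and> length ps \<ge> 2" if w: "{last ps, w} \<in> E" for w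
  proof -
    have wV: "w \<in> V" and wne: "w \<noteq> last ps" using wf[OF w] by auto
    have "w \<in> set ps"
    proof (rule ccontr)
      assume "w \<notin> set ps"
      hence "?P (ps @ [w])" using path_snoc[OF _ wV w] ps by simp
      with mx have "length (ps @ [w]) \<le> length ps" by blast
      thus False by simp
    qed
    then obtain i where i: "i < length ps" "ps ! i = w" by (auto simp: in_set_conv_nth)
    have il: "i \<noteq> length ps - 1" using wne i psne by (auto simp: last_conv_nth)
    have "\<not> i < length ps - 2"
    proof
      assume i2: "i < length ps - 2"
      let ?cs = "drop i ps"
      have "is_cycle V E ?cs" unfolding is_cycle_def
      proof (intro conjI)
        show "3 \<le> length ?cs" using i2 by simp
        show "distinct ?cs" using ps by simp
        show "is_path V E ?cs" using path_drop ps i by blast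
        have "last ?cs = last ps" using i by simp
        moreover have "hd ?cs = w" using i by (simp add: hd_drop_conv_nth)
        ultimately show "{last ?cs, hd ?cs} \<in> E" using w by simp
      qed
      with nc show False by blast
    qed
    then have "i = length ps - 2 \<and> length ps \<ge> 2" using i il by arith
    then show ?thesis using i by simp
  qed
  have "last ps \<in> V" using ps psne unfolding is_path_def by (meson last_in_set subsetD)
  moreover have "\<forall>y z. {last ps,y}\<in>E \<longrightarrow> {last ps,z}\<in>E \<longrightarrow> y = z"
  proof (intro allI impI)
    fix y z assume "{last ps,y}\<in>E" "{last ps,z}\<in>E"
    then show "y = z" using key[of y] key[of z] by simp
  qed
  ultimately show ?thesis by blast
qed



lemma forest_fun:
  fixes S :: "'a \<Rightarrow> 'b set" and C :: "'a \<Rightarrow> 'a \<Rightarrow> 'b \<Rightarrow> 'b \<Rightarrow> bool"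
  assumes "finite V"
    and "\<And>u v. {u,v} \<in> E \<Longrightarrow> u \<in> V \<and> v \<in> V \<and> u \<noteq> v"
    and "\<nexists>cs. is_cycle V E cs"
    and "\<And>v. v \<in> V \<Longrightarrow> S v \<noteq> {}"
    and "\<And>u v a. {u,v} \<in> E \<Longrightarrow> a \<in> S u \<Longrightarrow> \<exists>b\<in>S v. C u v a b"
    and "\<And>u v a b. C u v a b \<Longrightarrow> C v u b a"
  shows "\<exists>\<phi>. (\<forall>v\<in>V. \<phi> v \<in> S v) \<and> (\<forall>u v. {u,v} \<in> E \<longrightarrow> C u v (\<phi> u) (\<phi> v))"
  using assms(1-5)
proof (induction "card V" arbitrary: V E rule: less_induct)
  case less
  show ?case
  proof (cases "V = {}")
    case True
    then have "E' = E \<Longrightarrow> \<forall>u v. {u,v} \<notin> E'" for E' using less.prems(2) by blast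
    then show ?thesis using True by blast
  next
    case False
    obtain x where xV: "x \<in> V" and leaf: "\<And>y z. {x,y} \<in> E \<Longrightarrow> {x,z} \<in> E \<Longrightarrow> y = z"
      using leaf_exists[OF less.prems(1) False less.prems(2) less.prems(3)] by blast
    define V' where "V' = V - {x}"
    define E' where "E' = {e\<in>E. x \<notin> e}"
    have c: "card V' < card V" unfolding V'_def using xV less.prems(1) by (metis card_Diff1_less)
    have f': "finite V'" unfolding V'_def using less.prems(1) by simp
    have w': "{u,v} \<in> E' \<Longrightarrow> u \<in> V' \<and> v \<in> V' \<and> u \<noteq> v" for u v
      using less.prems(2)[of u v] unfolding E'_def V'_def by auto
    have nc': "\<nexists>cs. is_cycle V' E' cs"
      using less.prems(3) cycle_mono[of V' E' _ V E] unfolding V'_def E'_def by blast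
    obtain \<phi> where phS: "\<forall>v\<in>V'. \<phi> v \<in> S v" and phC: "\<forall>u v. {u,v} \<in> E' \<longrightarrow> C u v (\<phi> u) (\<phi> v)"
      using less.hyps[OF c f' w' nc'] less.prems(4,5) unfolding V'_def E'_def by auto
    define y0 where "y0 = (SOME y. {x,y} \<in> E)"
    define bx where "bx = (if \<exists>y. {x,y} \<in> E then (SOME b. b \<in> S x \<and> C y0 x (\<phi> y0) b) else (SOME b. b \<in> S x))"
    define \<psi> where "\<psi> = \<phi>(x := bx)"
    have bx: "bx \<in> S x \<and> ((\<exists>y. {x,y} \<in> E) \<longrightarrow> {x,y0} \<in> E \<and> C y0 x (\<phi> y0) bx)"
    proof (cases "\<exists>y. {x,y} \<in> E")
      case True
      then have e: "{x,y0} \<in> E" unfolding y0_def by (rule someI_ex)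
      then have "y0 \<in> V'" using less.prems(2)[OF e] unfolding V'_def by auto
      then have "\<phi> y0 \<in> S y0" using phS by blast
      moreover have "{y0,x} \<in> E" using e by (simp add: insert_commute)
      ultimately have ex: "\<exists>b. b \<in> S x \<and> C y0 x (\<phi> y0) b" using less.prems(5) by blast
      have "bx \<in> S x \<and> C y0 x (\<phi> y0) bx" unfolding bx_def using True someI_ex[OF ex] by simp
      then show ?thesis using e by blast
    next
      case False
      have ex: "\<exists>b. b \<in> S x" using less.prems(4)[OF xV] by blast
      show ?thesis unfolding bx_def using False someI_ex[OF ex] by simp
    qed
    show ?thesis
    proof (intro exI conjI allI impI ballI)
      fix v assume "v \<in> V"
      then show "\<psi> v \<in> S v" using phS bx unfolding \<psi>_def V'_def by auto
    next
      fix u v assume uv: "{u,v} \<in> E"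
      have une: "u \<noteq> v" using less.prems(2)[OF uv] by blast
      show "C u v (\<psi> u) (\<psi> v)"
      proof (cases "x \<in> {u,v}")
        case False
        then have "{u,v} \<in> E'" using uv unfolding E'_def by simp
        then show ?thesis using phC False unfolding \<psi>_def by auto
      next
        case True
        show ?thesis
        proof (cases "u = x")
          case ux: True
          then have "{x,v} \<in> E" using uv by simp
          then have "v = y0" using bx leaf by blast
          then have "C v x (\<phi> v) bx" using bx \<open>{x,v} \<in> E\<close> by blast
          then show ?thesis using ux une assms(6) unfolding \<psi>_def by auto
        next
          case uy: False
          then have vx: "v = x" using True by simp
          then have "{x,u} \<in> E" using uv by (simp add: insert_commute)
          then have "u = y0" using bx leaf by blast
          then have "C u x (\<phi> u) bx" using bx \<open>{x,u} \<in> E\<close> by blast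
          then show ?thesis using vx une unfolding \<psi>_def by auto
        qed
      qed
    qed
  qed
qed



lemma r3: "(a::int) mod 3 \<in> {0,1,2}"
proof -
  have "0 \<le> a mod 3" "a mod 3 < 3" by simp_all
  then show ?thesis by auto
qed
lemma r3add: "((a::int) + b) mod 3 = (a mod 3 + b) mod 3" by (simp add: mod_add_left_eq)
lemma r3sub: "((a::int) - b) mod 3 = (a mod 3 - b) mod 3" by (simp add: mod_diff_left_eq)

lemma mod3_step: "(c::int) \<in> {0,1,2} \<Longrightarrow> c \<noteq> a mod 3 \<Longrightarrow> \<exists>b. b mod 3 = c \<and> \<bar>a - b\<bar> = 1"
proof -
  assume h: "c \<in> {0,1,2}" "c \<noteq> a mod 3"
  have e1: "(a+1) mod 3 = (a mod 3 + 1) mod 3" by (rule r3add)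
  have e2: "(a-1) mod 3 = (a mod 3 - 1) mod 3" by (rule r3sub)
  have "c = (a mod 3 + 1) mod 3 \<or> c = (a mod 3 - 1) mod 3"
    using h r3[of a] by (cases "a mod 3 = 0"; cases "a mod 3 = 1"; auto)
  then show ?thesis
  proof
    assume "c = (a mod 3 + 1) mod 3" then show ?thesis using e1 by (intro exI[of _ "a+1"]) simp
  next
    assume "c = (a mod 3 - 1) mod 3" then show ?thesis using e2 by (intro exI[of _ "a-1"]) simp
  qed
qed

lemma mod3_two: "(a::int) mod 3 \<noteq> (a + 2) mod 3"
proof -
  have "(a+2) mod 3 = (a mod 3 + 2) mod 3" by (rule r3add)
  then show ?thesis using r3[of a] by auto
qed

lemma mod3_shift6: "((a::int) + 6 * m) mod 3 = a mod 3"
proof -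
  have "a + 6 * m = a + (2 * m) * 3" by simp
  then show ?thesis by (metis mod_mult_self1)
qed

lemma fin3: "(r::int) \<in> {0,1,2} \<Longrightarrow> c \<in> {0,1,2} \<Longrightarrow> c \<noteq> r \<Longrightarrow> c \<noteq> (r+2) mod 3 \<Longrightarrow> c = (r - 2) mod 3"
  by auto

lemma fin3b: "(r::int) \<in> {0,1,2} \<Longrightarrow> (r - 1) mod 3 = (r + 2) mod 3 \<and> (r + 1) mod 3 = (r - 2) mod 3"
  by auto

lemma mod3_step2:
  assumes "(c::int) \<in> {0,1,2}" "c \<noteq> a mod 3"
  defines "s \<equiv> (if c = (a + 2) mod 3 then 1 else -1::int)"
  shows "(a + 2 * s) mod 3 = c" "(a - s) mod 3 = (a + 2 * s) mod 3" "s = 1 \<or> s = -1"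
proof -
  have e1: "(a+2) mod 3 = (a mod 3 + 2) mod 3" by (rule r3add)
  have e2: "(a-2) mod 3 = (a mod 3 - 2) mod 3" by (rule r3sub)
  have e3: "(a+1) mod 3 = (a mod 3 + 1) mod 3" by (rule r3add)
  have e4: "(a-1) mod 3 = (a mod 3 - 1) mod 3" by (rule r3sub)
  have fb: "(a mod 3 - 1) mod 3 = (a mod 3 + 2) mod 3 \<and> (a mod 3 + 1) mod 3 = (a mod 3 - 2) mod 3"
    using fin3b[OF r3[of a]] .
  show "s = 1 \<or> s = -1" unfolding s_def by simp
  show "(a + 2 * s) mod 3 = c"
  proof (cases "c = (a + 2) mod 3")
    case True then show ?thesis unfolding s_def by simp
  next
    case False
    then have "c = (a mod 3 - 2) mod 3" using fin3[OF r3[of a] assms(1) assms(2)] e1 by simp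
    then show ?thesis using False e2 unfolding s_def by simp
  qed
  show "(a - s) mod 3 = (a + 2 * s) mod 3"
  proof (cases "c = (a + 2) mod 3")
    case True
    then have "s = 1" unfolding s_def by simp
    then show ?thesis using e1 e4 fb by simp
  next
    case False
    then have "s = -1" unfolding s_def by simp
    then show ?thesis using e2 e3 fb by simp
  qed
qed

lemma dvd3_step: "3 dvd (x::int) \<Longrightarrow> 3 dvd y \<Longrightarrow> y - x \<in> {-2,0,2} \<Longrightarrow> y = x"
proof -
  assume a: "3 dvd x" "3 dvd y" "y - x \<in> {-2,0,2}"
  have "3 dvd (y - x)" using a by simp
  then show "y = x" using a(3) by auto
qed

lemma dvd3_two: "3 dvd (2 * (x::int)) \<Longrightarrow> 3 dvd x"
proof -
  assume "3 dvd 2 * x"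
  then have "3 dvd (3 * x - 2 * x)" by (intro dvd_diff) simp_all
  moreover have "3 * x - 2 * x = x" by simp
  ultimately show ?thesis by simp
qed

definition ht :: "'a set set \<Rightarrow> ('a \<Rightarrow> int) \<Rightarrow> bool" where
  "ht E \<phi> \<longleftrightarrow> (\<forall>u v. {u,v} \<in> E \<longrightarrow> \<bar>\<phi> u - \<phi> v\<bar> = 1)"

definition col :: "'a set \<Rightarrow> ('a \<Rightarrow> int) \<Rightarrow> 'a \<Rightarrow> nat" where
  "col V \<phi> = (\<lambda>v. if v \<in> V then nat (\<phi> v mod 3) else undefined)"

lemma col_proper:
  assumes "is_tree V E" "ht E \<phi>"
  shows "proper3 V E (col V \<phi>)"
  unfolding proper3_def
proof (intro conjI allI impI)
  show "col V \<phi> \<in> V \<rightarrow>\<^sub>E {0, 1, 2}"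
  proof
    fix v assume "v \<in> V"
    have "\<phi> v mod 3 = 0 \<or> \<phi> v mod 3 = 1 \<or> \<phi> v mod 3 = 2" by presburger
    then have "\<phi> v mod 3 \<in> {0,1,2}" by auto
    then show "col V \<phi> v \<in> {0,1,2}" unfolding col_def using \<open>v \<in> V\<close> by auto
  qed (simp add: col_def)
  fix u v assume e: "{u,v} \<in> E"
  then have "u \<in> V" "v \<in> V" using tree_edge[OF assms(1)] by auto
  moreover have "\<bar>\<phi> u - \<phi> v\<bar> = 1" using assms(2) e unfolding ht_def by blast
  moreover have "\<phi> u = \<phi> v + 1 \<or> \<phi> u = \<phi> v - 1" using calculation(3) by arith
  then have "\<phi> u mod 3 \<noteq> \<phi> v mod 3" by presburger
  then have "nat (\<phi> u mod 3) \<noteq> nat (\<phi> v mod 3)" by (simp add: eq_nat_nat_iff)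
  ultimately show "col V \<phi> u \<noteq> col V \<phi> v" unfolding col_def by simp
qed

lemma lift_exists:
  assumes "is_tree V E" "proper3 V E f"
  shows "\<exists>\<phi>. ht E \<phi> \<and> col V \<phi> = f"
proof -
  have wf: "\<And>u v. {u,v} \<in> E \<Longrightarrow> u \<in> V \<and> v \<in> V \<and> u \<noteq> v" using tree_edge[OF assms(1)] by blast
  have fV: "f v \<in> {0,1,2}" if "v \<in> V" for v
    using PiE_mem[of f V "\<lambda>_. {0,1,2}" v] assms(2) that unfolding proper3_def by blast
  let ?S = "\<lambda>v. {a::int. a mod 3 = int (f v)}"
  let ?C = "\<lambda>(u::'a) (v::'a) (a::int) b. \<bar>a - b\<bar> = 1"
  have fV3: "int (f v) \<in> {0,1,2}" if "v \<in> V" for v using fV[OF that] by auto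
  have "\<exists>\<phi>. (\<forall>v\<in>V. \<phi> v \<in> ?S v) \<and> (\<forall>u v. {u,v} \<in> E \<longrightarrow> ?C u v (\<phi> u) (\<phi> v))"
  proof (rule forest_fun)
    show "finite V" using assms(1) unfolding is_tree_def by blast
    show "\<nexists>cs. is_cycle V E cs" using assms(1) unfolding is_tree_def by blast
    show "\<And>u v. {u,v} \<in> E \<Longrightarrow> u \<in> V \<and> v \<in> V \<and> u \<noteq> v" by (rule wf)
    show "\<And>v. v \<in> V \<Longrightarrow> ?S v \<noteq> {}"
    proof -
      fix v assume "v \<in> V"
      then have "int (f v) mod 3 = int (f v)" using fV3[of v] by auto
      then show "?S v \<noteq> {}" by blast
    qed
    show "\<And>u v a b. ?C u v a b \<Longrightarrow> ?C v u b a" by auto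
    fix u v a assume e: "{u,v} \<in> E" and a: "a \<in> ?S u"
    have "f u \<noteq> f v" using assms(2) e unfolding proper3_def by blast
    moreover have "v \<in> V" using wf[OF e] by blast
    moreover have "a mod 3 = int (f u)" using a by simp
    ultimately have "\<exists>b. b mod 3 = int (f v) \<and> \<bar>a - b\<bar> = 1"
      using mod3_step[OF fV3[of v]] by simp
    then show "\<exists>b\<in>?S v. ?C u v a b" by auto
  qed
  then obtain \<phi> where p0: "\<forall>v\<in>V. \<phi> v \<in> ?S v" and p3: "\<forall>u v. {u,v} \<in> E \<longrightarrow> ?C u v (\<phi> u) (\<phi> v)" by blast
  have p1: "\<forall>v\<in>V. \<phi> v mod 3 = int (f v)" using p0 by blast
  have p2: "ht E \<phi>" using p3 unfolding ht_def by blast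
  have "col V \<phi> = f"
  proof
    fix v show "col V \<phi> v = f v"
    proof (cases "v \<in> V")
      case True then show ?thesis using p1 unfolding col_def by simp
    next
      case False
      have "f \<in> V \<rightarrow>\<^sub>E {0,1,2}" using assms(2) unfolding proper3_def by blast
      from PiE_arb[OF this False] show ?thesis using False unfolding col_def by simp
    qed
  qed
  then show ?thesis using p2 by blast
qed

lemma labeling_lift:
  assumes "is_tree V E" "is_labeling E h"
  shows "\<exists>\<phi>. ht E \<phi> \<and> ht E (\<lambda>v. \<phi> v + 2 * h v)"
proof -
  have wf: "\<And>u v. {u,v} \<in> E \<Longrightarrow> u \<in> V \<and> v \<in> V \<and> u \<noteq> v" using tree_edge[OF assms(1)] by blast
  let ?S = "\<lambda>v. (UNIV :: int set)"
  let ?C = "\<lambda>(u::'a) (v::'a) (a::int) b. \<bar>a - b\<bar> = 1 \<and> \<bar>a + 2 * h u - b - 2 * h v\<bar> = 1"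
  have "\<exists>\<phi>. (\<forall>v\<in>V. \<phi> v \<in> ?S v) \<and> (\<forall>u v. {u,v} \<in> E \<longrightarrow> ?C u v (\<phi> u) (\<phi> v))"
  proof (rule forest_fun)
    show "finite V" using assms(1) unfolding is_tree_def by blast
    show "\<nexists>cs. is_cycle V E cs" using assms(1) unfolding is_tree_def by blast
    show "\<And>u v. {u,v} \<in> E \<Longrightarrow> u \<in> V \<and> v \<in> V \<and> u \<noteq> v" by (rule wf)
    show "\<And>v. v \<in> V \<Longrightarrow> ?S v \<noteq> {}" by simp
    show "\<And>u v a b. ?C u v a b \<Longrightarrow> ?C v u b a" by auto
    fix u v a assume e: "{u,v} \<in> E"
    have "\<bar>h u - h v\<bar> \<le> 1" using assms(2) e unfolding is_labeling_def by blast
    then have "h v = h u + 1 \<or> h v = h u \<or> h v = h u - 1" by arith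
    then have "?C u v a (if h v > h u then a - 1 else a + 1)" by (auto simp: abs_if)
    then show "\<exists>b\<in>?S v. ?C u v a b" by blast
  qed
  then obtain \<phi> where "\<forall>u v. {u,v} \<in> E \<longrightarrow> ?C u v (\<phi> u) (\<phi> v)" by blast
  then have "ht E \<phi> \<and> ht E (\<lambda>v. \<phi> v + 2 * h v)" unfolding ht_def by (auto simp: algebra_simps)
  then show ?thesis by blast
qed



lemma cadj_sym: "cadj V f g \<Longrightarrow> cadj V g f"
proof -
  assume "cadj V f g"
  moreover have "{v \<in> V. f v \<noteq> g v} = {v \<in> V. g v \<noteq> f v}" by auto
  ultimately show ?thesis unfolding cadj_def by simp
qed

lemma cwalk_single: "proper3 V E f \<Longrightarrow> cwalk V E [f]"
  unfolding cwalk_def by simp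

lemma cwalk_Cons:
  assumes "cwalk V E fs" "proper3 V E f" "cadj V f (hd fs)"
  shows "cwalk V E (f # fs)"
  unfolding cwalk_def
proof (intro conjI allI impI ballI)
  show "f # fs \<noteq> []" by simp
  fix g assume "g \<in> set (f # fs)" then show "proper3 V E g" using assms unfolding cwalk_def by auto
next
  fix i assume i: "i + 1 < length (f # fs)"
  show "cadj V ((f # fs) ! i) ((f # fs) ! (i + 1))"
  proof (cases i)
    case 0 then show ?thesis using assms(1,3) unfolding cwalk_def by (simp add: hd_conv_nth)
  next
    case (Suc j)
    then have "j + 1 < length fs" using i by simp
    then show ?thesis using assms(1) Suc unfolding cwalk_def by simp
  qed
qed

lemma cwalk_snoc:
  assumes "cwalk V E fs" "proper3 V E g" "cadj V (last fs) g"
  shows "cwalk V E (fs @ [g])"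
  unfolding cwalk_def
proof (intro conjI allI impI ballI)
  show "fs @ [g] \<noteq> []" by simp
  fix f assume "f \<in> set (fs @ [g])" then show "proper3 V E f" using assms unfolding cwalk_def by auto
next
  fix i assume i: "i + 1 < length (fs @ [g])"
  have ne: "fs \<noteq> []" using assms(1) unfolding cwalk_def by simp
  show "cadj V ((fs @ [g]) ! i) ((fs @ [g]) ! (i + 1))"
  proof (cases "i + 1 < length fs")
    case True then show ?thesis using assms(1) unfolding cwalk_def by (simp add: nth_append)
  next
    case False
    then have "i = length fs - 1" using i by simp
    then show ?thesis using assms(3) ne by (simp add: nth_append last_conv_nth)
  qed
qed

lemma cwalk_tl:
  assumes "cwalk V E (f # fs)" "fs \<noteq> []"
  shows "cwalk V E fs \<and> cadj V f (hd fs) \<and> proper3 V E f"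
proof (intro conjI)
  show "proper3 V E f" using assms(1) unfolding cwalk_def by simp
  have "cadj V ((f#fs) ! 0) ((f#fs) ! (0+1))" using assms unfolding cwalk_def by (cases fs) auto
  then show "cadj V f (hd fs)" using assms(2) by (simp add: hd_conv_nth)
  show "cwalk V E fs" unfolding cwalk_def
  proof (intro conjI allI impI ballI)
    show "fs \<noteq> []" by fact
    fix g assume "g \<in> set fs" then show "proper3 V E g" using assms(1) unfolding cwalk_def by simp
  next
    fix i assume "i + 1 < length fs"
    then have "Suc i + 1 < length (f # fs)" by simp
    then have "cadj V ((f#fs) ! Suc i) ((f#fs) ! (Suc i + 1))" using assms(1) unfolding cwalk_def by blast
    then show "cadj V (fs ! i) (fs ! (i + 1))" by simp
  qed
qed

lemma col_eq: "(\<And>v. v \<in> V \<Longrightarrow> \<phi> v mod 3 = \<psi> v mod 3) \<Longrightarrow> col V \<phi> = col V \<psi>"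
  unfolding col_def by auto

lemma cadj_move:
  assumes "v \<in> V"
  shows "cadj V (col V \<phi>) (col V (\<phi>(v := \<phi> v + 2)))"
proof -
  have "{u \<in> V. col V \<phi> u \<noteq> col V (\<phi>(v := \<phi> v + 2)) u} = {v}"
  proof (intro equalityI subsetI)
    fix u assume "u \<in> {u \<in> V. col V \<phi> u \<noteq> col V (\<phi>(v := \<phi> v + 2)) u}"
    then show "u \<in> {v}" unfolding col_def by (cases "u = v") auto
  next
    fix u assume "u \<in> {v}"
    then have u: "u = v" by simp
    have "\<phi> v mod 3 \<noteq> (\<phi> v + 2) mod 3" by (rule mod3_two)
    then have "nat (\<phi> v mod 3) \<noteq> nat ((\<phi> v + 2) mod 3)" by (simp add: eq_nat_nat_iff)
    then show "u \<in> {u \<in> V. col V \<phi> u \<noteq> col V (\<phi>(v := \<phi> v + 2)) u}"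
      using u assms unfolding col_def by simp
  qed
  then show ?thesis unfolding cadj_def by simp
qed

lemma move_ht:
  assumes wf: "\<And>u v. {u,v} \<in> E \<Longrightarrow> u \<in> V \<and> v \<in> V \<and> u \<noteq> v"
    and "ht E \<phi>" "ht E \<psi>" "\<forall>w\<in>V. \<psi> w = \<phi> w + 2 * h w" "v \<in> V" "h v > 0"
    and mn: "\<forall>w\<in>V. h w > 0 \<longrightarrow> \<phi> v \<le> \<phi> w"
  shows "ht E (\<phi>(v := \<phi> v + 2))"
proof -
  have nb: "\<phi> w = \<phi> v + 1" if e: "{v,w} \<in> E" for w
  proof -
    have wV: "w \<in> V" using wf[OF e] by blast
    have d1: "\<bar>\<phi> v - \<phi> w\<bar> = 1" using assms(2) e unfolding ht_def by blast
    have d2: "\<bar>\<psi> v - \<psi> w\<bar> = 1" using assms(3) e unfolding ht_def by blast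
    show ?thesis
    proof (rule ccontr)
      assume "\<phi> w \<noteq> \<phi> v + 1"
      then have low: "\<phi> w = \<phi> v - 1" using d1 by arith
      show False
      proof (cases "h w > 0")
        case True then show False using mn wV low by force
      next
        case False
        then show False using d2 low assms(4) wV assms(5,6) by force
      qed
    qed
  qed
  show ?thesis unfolding ht_def
  proof (intro allI impI)
    fix a b assume e: "{a,b} \<in> E"
    have ab: "a \<noteq> b" using wf[OF e] by blast
    have old: "\<bar>\<phi> a - \<phi> b\<bar> = 1" using assms(2) e unfolding ht_def by blast
    show "\<bar>(\<phi>(v := \<phi> v + 2)) a - (\<phi>(v := \<phi> v + 2)) b\<bar> = 1"
    proof (cases "a = v")
      case True
      then have "\<phi> b = \<phi> v + 1" using nb e by blast
      then show ?thesis using True ab by simp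
    next
      case False
      note aF = False
      show ?thesis
      proof (cases "b = v")
        case True
        then have "{v,a} \<in> E" using e by (simp add: insert_commute)
        then have "\<phi> a = \<phi> v + 1" using nb by blast
        then show ?thesis using True aF by simp
      next
        case False then show ?thesis using aF old by simp
      qed
    qed
  qed
qed



lemma l1_nonneg: "0 \<le> l1norm V h"
  unfolding l1norm_def by (simp add: sum_nonneg)

lemma l1_upd:
  assumes "finite V" "v \<in> V"
  shows "l1norm V (h(v := x)) = l1norm V h - \<bar>h v\<bar> + \<bar>x\<bar>"
proof -
  have "l1norm V (h(v := x)) = \<bar>x\<bar> + (\<Sum>u\<in>V - {v}. \<bar>(h(v := x)) u\<bar>)"
    unfolding l1norm_def using sum.remove[OF assms, of "\<lambda>u. \<bar>(h(v := x)) u\<bar>"] by simp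
  also have "(\<Sum>u\<in>V - {v}. \<bar>(h(v := x)) u\<bar>) = (\<Sum>u\<in>V - {v}. \<bar>h u\<bar>)"
    by (rule sum.cong) auto
  also have "(\<Sum>u\<in>V - {v}. \<bar>h u\<bar>) = l1norm V h - \<bar>h v\<bar>"
    unfolding l1norm_def using sum.remove[OF assms, of "\<lambda>u. \<bar>h u\<bar>"] by simp
  finally show ?thesis by linarith
qed

lemma l1_zero:
  assumes "finite V" "l1norm V h = 0" "v \<in> V"
  shows "h v = 0"
proof -
  have "\<forall>u\<in>V. \<bar>h u\<bar> = 0" using assms(2) sum_nonneg_eq_0_iff[OF assms(1), of "\<lambda>u. \<bar>h u\<bar>"]
    unfolding l1norm_def by simp
  then show ?thesis using assms(3) by simp
qed

lemma exists_min:
  fixes g :: "'a \<Rightarrow> int"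
  assumes "finite D" "x \<in> D"
  shows "\<exists>v\<in>D. \<forall>w\<in>D. g v \<le> g w"
proof -
  have "finite (g ` D)" "g ` D \<noteq> {}" using assms by auto
  then have "Min (g ` D) \<in> g ` D" by (rule Min_in)
  then obtain v where v: "v \<in> D" "g v = Min (g ` D)" by auto
  have "\<forall>w\<in>D. g v \<le> g w" using v(2) \<open>finite (g ` D)\<close> by simp
  then show ?thesis using v(1) by blast
qed

lemma UB:
  assumes tree: "is_tree V E"
  shows "ht E \<phi> \<Longrightarrow> ht E \<psi> \<Longrightarrow> \<forall>v\<in>V. \<psi> v = \<phi> v + 2 * h v \<Longrightarrow> l1norm V h = int n \<Longrightarrow>
    \<exists>fs. cwalk V E fs \<and> hd fs = col V \<phi> \<and> last fs = col V \<psi> \<and> length fs = n + 1"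
proof (induction n arbitrary: \<phi> \<psi> h)
  case 0
  have fin: "finite V" using tree unfolding is_tree_def by blast
  have "\<And>v. v \<in> V \<Longrightarrow> h v = 0" using l1_zero[OF fin] 0 by simp
  then have "col V \<phi> = col V \<psi>" using 0 by (intro col_eq) simp
  moreover have "cwalk V E [col V \<phi>]" using col_proper[OF tree 0(1)] by (rule cwalk_single)
  ultimately show ?case by (intro exI[of _ "[col V \<phi>]"]) simp
next
  case (Suc n)
  have fin: "finite V" using tree unfolding is_tree_def by blast
  have wf: "\<And>u v. {u,v} \<in> E \<Longrightarrow> u \<in> V \<and> v \<in> V \<and> u \<noteq> v" using tree_edge[OF tree] by blast
  have nz: "\<exists>v\<in>V. h v \<noteq> 0"
  proof (rule ccontr)
    assume "\<not> (\<exists>v\<in>V. h v \<noteq> 0)"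
    then have "l1norm V h = 0" unfolding l1norm_def by simp
    then show False using Suc.prems(4) by simp
  qed
  show ?case
  proof (cases "\<exists>v\<in>V. h v > 0")
    case True
    then obtain x where "x \<in> {v\<in>V. h v > 0}" by blast
    then obtain v where v: "v \<in> {v\<in>V. h v > 0}" and mn0: "\<forall>w\<in>{v\<in>V. h v > 0}. \<phi> v \<le> \<phi> w"
      using exists_min[of "{v\<in>V. h v > 0}" x \<phi>] fin by auto
    have vV: "v \<in> V" and hv: "h v > 0" using v by auto
    have mn: "\<forall>w\<in>V. h w > 0 \<longrightarrow> \<phi> v \<le> \<phi> w" using mn0 by auto
    define \<phi>' where "\<phi>' = \<phi>(v := \<phi> v + 2)"
    define h' where "h' = h(v := h v - 1)"
    have ht': "ht E \<phi>'" unfolding \<phi>'_def using move_ht[OF wf Suc.prems(1,2,3) vV hv mn] by blast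
    have rel: "\<forall>w\<in>V. \<psi> w = \<phi>' w + 2 * h' w" using Suc.prems(3) unfolding \<phi>'_def h'_def by auto
    have l1: "l1norm V h' = int n" unfolding h'_def using l1_upd[OF fin vV, of h "h v - 1"] Suc.prems(4) hv by simp
    obtain fs where fs: "cwalk V E fs" "hd fs = col V \<phi>'" "last fs = col V \<psi>" "length fs = n + 1"
      using Suc.IH[OF ht' Suc.prems(2) rel l1] by blast
    have ne: "fs \<noteq> []" using fs(4) by auto
    have "cwalk V E (col V \<phi> # fs)"
      using cwalk_Cons[OF fs(1) col_proper[OF tree Suc.prems(1)]] cadj_move[OF vV, of \<phi>] fs(2)
      unfolding \<phi>'_def by simp
    then show ?thesis using fs ne by (intro exI[of _ "col V \<phi> # fs"]) simp
  next
    case False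
    then have "\<exists>v\<in>V. h v < 0" using nz by force
    then obtain x where "x \<in> {v\<in>V. h v < 0}" by blast
    then obtain v where v: "v \<in> {v\<in>V. h v < 0}" and mn0: "\<forall>w\<in>{v\<in>V. h v < 0}. \<psi> v \<le> \<psi> w"
      using exists_min[of "{v\<in>V. h v < 0}" x \<psi>] fin by auto
    have vV: "v \<in> V" and hv: "(\<lambda>w. - h w) v > 0" using v by auto
    have mn: "\<forall>w\<in>V. (\<lambda>w. - h w) w > 0 \<longrightarrow> \<psi> v \<le> \<psi> w" using mn0 by auto
    have rel0: "\<forall>w\<in>V. \<phi> w = \<psi> w + 2 * (\<lambda>w. - h w) w" using Suc.prems(3) by auto
    define \<psi>' where "\<psi>' = \<psi>(v := \<psi> v + 2)"
    define h' where "h' = h(v := h v + 1)"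
    have ht': "ht E \<psi>'" unfolding \<psi>'_def using move_ht[OF wf Suc.prems(2,1) rel0 vV hv mn] by blast
    have rel: "\<forall>w\<in>V. \<psi>' w = \<phi> w + 2 * h' w" using Suc.prems(3) unfolding \<psi>'_def h'_def by auto
    have l1: "l1norm V h' = int n" unfolding h'_def using l1_upd[OF fin vV, of h "h v + 1"] Suc.prems(4) hv by simp
    obtain fs where fs: "cwalk V E fs" "hd fs = col V \<phi>" "last fs = col V \<psi>'" "length fs = n + 1"
      using Suc.IH[OF Suc.prems(1) ht' rel l1] by blast
    have ne: "fs \<noteq> []" using fs(4) by auto
    have "cwalk V E (fs @ [col V \<psi>])"
      using cwalk_snoc[OF fs(1) col_proper[OF tree Suc.prems(2)]] cadj_sym[OF cadj_move[OF vV, of \<psi>]] fs(3)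
      unfolding \<psi>'_def by simp
    then show ?thesis using fs ne by (intro exI[of _ "fs @ [col V \<psi>]"]) simp
  qed
qed



lemma LB_step:
  assumes tree: "is_tree V E" and "ht E \<phi>" "proper3 V E g" "cadj V (col V \<phi>) g"
  shows "\<exists>v\<in>V. \<exists>s::int. (s = 1 \<or> s = -1) \<and> ht E (\<phi>(v := \<phi> v + 2*s)) \<and> col V (\<phi>(v := \<phi> v + 2*s)) = g"
proof -
  have wf: "\<And>u v. {u,v} \<in> E \<Longrightarrow> u \<in> V \<and> v \<in> V \<and> u \<noteq> v" using tree_edge[OF tree] by blast
  have gPi: "g \<in> V \<rightarrow>\<^sub>E {0,1,2}" using assms(3) unfolding proper3_def by blast
  have gV: "g u \<in> {0,1,2}" if "u \<in> V" for u using PiE_mem[OF gPi that] .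
  have gE: "g a \<noteq> g b" if "{a,b} \<in> E" for a b using assms(3) that unfolding proper3_def by blast
  obtain v where vs: "{u \<in> V. col V \<phi> u \<noteq> g u} = {v}"
    using assms(4) unfolding cadj_def by (rule card_1_singletonE)
  have vmem: "v \<in> {u \<in> V. col V \<phi> u \<noteq> g u}" using vs by simp
  then have vV: "v \<in> V" and dv: "col V \<phi> v \<noteq> g v" by simp_all
  have same: "g u = col V \<phi> u" if "u \<in> V" "u \<noteq> v" for u
  proof -
    have "u \<notin> {u \<in> V. col V \<phi> u \<noteq> g u}" using vs that(2) by simp
    then show ?thesis using that(1) by simp
  qed
  define c where "c = int (g v)"
  have c3: "c \<in> {0,1,2}" unfolding c_def using gV[OF vV] by auto
  have cne: "c \<noteq> \<phi> v mod 3"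
  proof
    assume "c = \<phi> v mod 3"
    then have "nat (\<phi> v mod 3) = g v" unfolding c_def by simp
    then show False using dv vV unfolding col_def by simp
  qed
  define s where "s = (if c = (\<phi> v + 2) mod 3 then 1 else -1::int)"
  have s1: "(\<phi> v + 2 * s) mod 3 = c" and s2: "(\<phi> v - s) mod 3 = (\<phi> v + 2 * s) mod 3"
    and s3: "s = 1 \<or> s = -1"
    using mod3_step2[OF c3 cne] unfolding s_def by blast+
  define \<phi>' where "\<phi>' = \<phi>(v := \<phi> v + 2*s)"
  have colg: "col V \<phi>' = g"
  proof
    fix u show "col V \<phi>' u = g u"
    proof (cases "u \<in> V")
      case False
      from PiE_arb[OF gPi False] show ?thesis using False unfolding col_def by simp
    next
      case True
      show ?thesis
      proof (cases "u = v")
        case True then show ?thesis using s1 vV unfolding col_def \<phi>'_def c_def by simp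
      next
        case False then show ?thesis using same[OF \<open>u \<in> V\<close> False] \<open>u \<in> V\<close> unfolding col_def \<phi>'_def by simp
      qed
    qed
  qed
  have nb: "\<phi> w = \<phi> v + s" if e: "{v,w} \<in> E" for w
  proof (rule ccontr)
    assume nw: "\<phi> w \<noteq> \<phi> v + s"
    have wV: "w \<in> V" and wv: "v \<noteq> w" using wf[OF e] by auto
    have d1: "\<bar>\<phi> v - \<phi> w\<bar> = 1" using assms(2) e unfolding ht_def by blast
    have "\<phi> w = \<phi> v - s" using d1 nw s3 by auto
    then have "\<phi> w mod 3 = c" using s1 s2 by simp
    then have "col V \<phi> w = g v" using wV unfolding col_def c_def by simp
    moreover have "g w = col V \<phi> w" using same[OF wV] wv by simp
    moreover have "g v \<noteq> g w" using gE[OF e] .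
    ultimately show False by simp
  qed
  have "ht E \<phi>'" unfolding ht_def
  proof (intro allI impI)
    fix a b assume e: "{a,b} \<in> E"
    have ab: "a \<noteq> b" using wf[OF e] by blast
    have old: "\<bar>\<phi> a - \<phi> b\<bar> = 1" using assms(2) e unfolding ht_def by blast
    show "\<bar>\<phi>' a - \<phi>' b\<bar> = 1"
    proof (cases "a = v")
      case True
      then have "\<phi> b = \<phi> v + s" using nb e by blast
      then show ?thesis using True ab s3 unfolding \<phi>'_def by auto
    next
      case False
      note aF = False
      show ?thesis
      proof (cases "b = v")
        case True
        then have "{v,a} \<in> E" using e by (simp add: insert_commute)
        then have "\<phi> a = \<phi> v + s" using nb by blast
        then show ?thesis using True aF s3 unfolding \<phi>'_def by auto
      next
        case False then show ?thesis using aF old unfolding \<phi>'_def by simp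
      qed
    qed
  qed
  then show ?thesis using colg s3 vV unfolding \<phi>'_def by blast
qed

lemma LB:
  assumes tree: "is_tree V E"
  shows "cwalk V E fs \<Longrightarrow> ht E \<phi> \<Longrightarrow> hd fs = col V \<phi> \<Longrightarrow>
    \<exists>\<psi> h. ht E \<psi> \<and> col V \<psi> = last fs \<and> (\<forall>v\<in>V. \<psi> v = \<phi> v + 2 * h v) \<and> l1norm V h \<le> int (length fs - 1)"
proof (induction fs arbitrary: \<phi>)
  case Nil then show ?case unfolding cwalk_def by simp
next
  case (Cons f fs)
  show ?case
  proof (cases "fs = []")
    case True
    have "l1norm V (\<lambda>_. 0) = 0" unfolding l1norm_def by simp
    then show ?thesis using Cons.prems True by (intro exI[of _ \<phi>] exI[of _ "\<lambda>_. 0"]) simp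
  next
    case False
    from cwalk_tl[OF Cons.prems(1) False] have w: "cwalk V E fs" and c: "cadj V f (hd fs)" by auto
    have p: "proper3 V E (hd fs)" using w False unfolding cwalk_def by simp
    have c': "cadj V (col V \<phi>) (hd fs)" using c Cons.prems(3) by simp
    obtain v s where vV: "v \<in> V" and s: "s = 1 \<or> s = -1" and ht': "ht E (\<phi>(v := \<phi> v + 2*s))"
      and col': "col V (\<phi>(v := \<phi> v + 2*s)) = hd fs"
      using LB_step[OF tree Cons.prems(2) p c'] by blast
    obtain \<psi> h2 where h2: "ht E \<psi>" "col V \<psi> = last fs"
      "\<forall>u\<in>V. \<psi> u = (\<phi>(v := \<phi> v + 2*s)) u + 2 * h2 u" "l1norm V h2 \<le> int (length fs - 1)"
      using Cons.IH[OF w ht' col'[symmetric]] by blast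
    define h where "h = (\<lambda>u. h2 u + (if u = v then s else 0))"
    have rel: "\<forall>u\<in>V. \<psi> u = \<phi> u + 2 * h u" using h2(3) unfolding h_def by auto
    have fin: "finite V" using tree unfolding is_tree_def by blast
    have "l1norm V h \<le> (\<Sum>u\<in>V. \<bar>h2 u\<bar> + \<bar>if u = v then s else 0\<bar>)"
      unfolding l1norm_def h_def by (rule sum_mono) (rule abs_triangle_ineq)
    also have "\<dots> = l1norm V h2 + (\<Sum>u\<in>V. \<bar>if u = v then s else 0\<bar>)"
      unfolding l1norm_def by (rule sum.distrib)
    also have "(\<Sum>u\<in>V. \<bar>if u = v then s else 0\<bar>) = (\<Sum>u\<in>V. if u = v then \<bar>s\<bar> else 0)"
      by (rule sum.cong) auto
    also have "\<dots> = \<bar>s\<bar>" using fin vV by simp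
    also have "\<bar>s\<bar> = 1" using s by auto
    finally have "l1norm V h \<le> l1norm V h2 + 1" .
    also have "\<dots> \<le> int (length (f # fs) - 1)" using h2(4) False by (cases fs) auto
    finally show ?thesis using h2(1,2) rel False by (intro exI[of _ \<psi>] exI[of _ h]) simp
  qed
qed



lemma even_step:
  assumes "\<bar>(a::int) - b\<bar> = 1" "\<bar>(c::int) - d\<bar> = 1" "even (a - c)"
  shows "even (b - d)"
proof -
  define k where "k = (a - b) - (c - d)"
  have "k = -2 \<or> k = 0 \<or> k = 2" using assms(1,2) unfolding k_def by arith
  then have ek: "even k" by auto
  have "b - d = (a - c) - k" unfolding k_def by simp
  then show ?thesis using assms(3) ek by simp
qed

lemma UBmain:
  assumes tree: "is_tree V E" and pf: "proper3 V E f" and pg: "proper3 V E g"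
  shows "\<exists>h. is_labeling E h \<and> balanced V h \<and> cdist V E f g \<le> enat (nat (l1norm V h))"
proof -
  have wf: "\<And>u v. {u,v} \<in> E \<Longrightarrow> u \<in> V \<and> v \<in> V \<and> u \<noteq> v" using tree_edge[OF tree] by blast
  obtain r where rV: "r \<in> V" using tree unfolding is_tree_def by blast
  obtain \<phi> where hp: "ht E \<phi>" and cp: "col V \<phi> = f" using lift_exists[OF tree pf] by blast
  obtain \<psi>0 where hq: "ht E \<psi>0" and cq: "col V \<psi>0 = g" using lift_exists[OF tree pg] by blast
  define \<psi>1 where "\<psi>1 = (if even (\<psi>0 r - \<phi> r) then \<psi>0 else (\<lambda>v. \<psi>0 v + 3))"
  have ht1: "ht E \<psi>1" using hq unfolding \<psi>1_def ht_def by auto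
  have col1: "col V \<psi>1 = g"
  proof -
    have "col V \<psi>1 = col V \<psi>0" by (rule col_eq) (simp add: \<psi>1_def)
    then show ?thesis using cq by simp
  qed
  have evr: "even (\<psi>1 r - \<phi> r)" unfolding \<psi>1_def by auto
  have ev: "even (\<psi>1 v - \<phi> v)" if "v \<in> V" for v
  proof (rule tree_prop[where P="\<lambda>v. even (\<psi>1 v - \<phi> v)", OF tree _ rV evr that])
    fix a b assume e: "{a,b} \<in> E" and "even (\<psi>1 a - \<phi> a)"
    moreover have "\<bar>\<psi>1 a - \<psi>1 b\<bar> = 1" using ht1 e unfolding ht_def by blast
    moreover have "\<bar>\<phi> a - \<phi> b\<bar> = 1" using hp e unfolding ht_def by blast
    ultimately show "even (\<psi>1 b - \<phi> b)" using even_step by blast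
  qed
  define h0 where "h0 = (\<lambda>v. (\<psi>1 v - \<phi> v) div 2)"
  have rel0: "\<psi>1 v = \<phi> v + 2 * h0 v" if "v \<in> V" for v
  proof -
    have "2 * ((\<psi>1 v - \<phi> v) div 2) = \<psi>1 v - \<phi> v" using ev[OF that] by simp
    then show ?thesis unfolding h0_def by simp
  qed
  obtain m0 where m0: "\<forall>m. nat (l1norm V (\<lambda>v. h0 v + 3 * m0)) \<le> nat (l1norm V (\<lambda>v. h0 v + 3 * m))"
    using ex_has_least_nat[of "\<lambda>_. True" 0 "\<lambda>m. nat (l1norm V (\<lambda>v. h0 v + 3 * m))"] by blast
  define h where "h = (\<lambda>v. h0 v + 3 * m0)"
  have bal: "balanced V h" unfolding balanced_def
  proof
    fix m :: int
    have eq: "(\<lambda>v. h v + 3 * m) = (\<lambda>v. h0 v + 3 * (m0 + m))" unfolding h_def by (simp add: algebra_simps)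
    have "nat (l1norm V h) \<le> nat (l1norm V (\<lambda>v. h0 v + 3 * (m0 + m)))" using m0 unfolding h_def by blast
    then have "nat (l1norm V h) \<le> nat (l1norm V (\<lambda>v. h v + 3 * m))" unfolding eq .
    then show "l1norm V h \<le> l1norm V (\<lambda>v. h v + 3 * m)"
      using nat_le_eq_zle[of "l1norm V h" "l1norm V (\<lambda>v. h v + 3 * m)"] l1_nonneg[of V "\<lambda>v. h v + 3 * m"] by simp
  qed
  have lab: "is_labeling E h" unfolding is_labeling_def
  proof (intro allI impI)
    fix u v assume e: "{u,v} \<in> E"
    have "u \<in> V" "v \<in> V" using wf[OF e] by auto
    moreover have "\<bar>\<psi>1 u - \<psi>1 v\<bar> = 1" using ht1 e unfolding ht_def by blast
    moreover have "\<bar>\<phi> u - \<phi> v\<bar> = 1" using hp e unfolding ht_def by blast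
    ultimately have "\<bar>h0 u - h0 v\<bar> \<le> 1" using rel0 by force
    then show "\<bar>h u - h v\<bar> \<le> 1" unfolding h_def by simp
  qed
  define \<psi> where "\<psi> = (\<lambda>v. \<psi>1 v + 6 * m0)"
  have ht2: "ht E \<psi>" using ht1 unfolding ht_def \<psi>_def by simp
  have col2: "col V \<psi> = g"
  proof -
    have "col V \<psi> = col V \<psi>1" by (rule col_eq) (simp add: \<psi>_def mod3_shift6)
    then show ?thesis using col1 by simp
  qed
  have rel: "\<forall>v\<in>V. \<psi> v = \<phi> v + 2 * h v" using rel0 unfolding \<psi>_def h_def by simp
  have "l1norm V h = int (nat (l1norm V h))" using l1_nonneg[of V h] by simp
  from UB[OF tree hp ht2 rel this] obtain fs where
    fs: "cwalk V E fs" "hd fs = col V \<phi>" "last fs = col V \<psi>" "length fs = nat (l1norm V h) + 1" by blast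
  have "cdist V E f g \<le> enat (length fs - 1)" unfolding cdist_def
    by (rule INF_lower) (use fs cp col2 in auto)
  then have "cdist V E f g \<le> enat (nat (l1norm V h))" using fs(4) by simp
  then show ?thesis using lab bal by blast
qed

lemma LBmain:
  assumes tree: "is_tree V E" and lab: "is_labeling E h" and bal: "balanced V h"
  shows "\<exists>f g. proper3 V E f \<and> proper3 V E g \<and> enat (nat (l1norm V h)) \<le> cdist V E f g"
proof -
  have wf: "\<And>u v. {u,v} \<in> E \<Longrightarrow> u \<in> V \<and> v \<in> V \<and> u \<noteq> v" using tree_edge[OF tree] by blast
  obtain r where rV: "r \<in> V" using tree unfolding is_tree_def by blast
  obtain \<phi> where hp: "ht E \<phi>" and hq: "ht E (\<lambda>v. \<phi> v + 2 * h v)" using labeling_lift[OF tree lab] by blast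
  define \<psi> where "\<psi> = (\<lambda>v. \<phi> v + 2 * h v)"
  have "enat (nat (l1norm V h)) \<le> cdist V E (col V \<phi>) (col V \<psi>)" unfolding cdist_def
  proof (rule INF_greatest)
    fix fs assume "fs \<in> {fs. cwalk V E fs \<and> hd fs = col V \<phi> \<and> last fs = col V \<psi>}"
    then have fs: "cwalk V E fs" "hd fs = col V \<phi>" "last fs = col V \<psi>" by auto
    from LB[OF tree fs(1) hp fs(2)] obtain \<psi>' h' where p: "ht E \<psi>'" "col V \<psi>' = last fs" "\<forall>v\<in>V. \<psi>' v = \<phi> v + 2 * h' v"
      "l1norm V h' \<le> int (length fs - 1)" by blast
    have p2: "col V \<psi>' = col V \<psi>" using p(2) fs(3) by simp
    define d where "d = (\<lambda>v. \<psi>' v - \<psi> v)"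
    have d3: "3 dvd d v" if "v \<in> V" for v
    proof -
      have "col V \<psi>' v = col V \<psi> v" using p2 by simp
      then have "nat (\<psi>' v mod 3) = nat (\<psi> v mod 3)" using that unfolding col_def by simp
      then have "\<psi>' v mod 3 = \<psi> v mod 3" by (simp add: eq_nat_nat_iff)
      then show ?thesis unfolding d_def by (simp add: mod_eq_dvd_iff)
    qed
    have dc: "d v = d r" if "v \<in> V" for v
    proof (rule tree_prop[where P="\<lambda>v. d v = d r", OF tree _ rV _ that])
      fix a b assume e: "{a,b} \<in> E" and ia: "d a = d r"
      have aV: "a \<in> V" and bV: "b \<in> V" using wf[OF e] by auto
      have "\<bar>\<psi>' a - \<psi>' b\<bar> = 1" using p(1) e unfolding ht_def by blast
      then have x: "\<psi>' a - \<psi>' b = 1 \<or> \<psi>' a - \<psi>' b = -1" by arith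
      have "\<bar>\<psi> a - \<psi> b\<bar> = 1" using hq e unfolding ht_def \<psi>_def by blast
      then have y: "\<psi> a - \<psi> b = 1 \<or> \<psi> a - \<psi> b = -1" by arith
      have "d b - d a = (\<psi> a - \<psi> b) - (\<psi>' a - \<psi>' b)" unfolding d_def by simp
      then have "d b - d a \<in> {-2,0,2}" using x y by auto
      then have "d b = d a" by (rule dvd3_step[OF d3[OF aV] d3[OF bV]])
      then show "d b = d r" using ia by simp
    qed simp
    have dr: "d r = 2 * (h' r - h r)" using p(3) rV unfolding d_def \<psi>_def by simp
    then have "3 dvd 2 * (h' r - h r)" using d3[OF rV] by simp
    then have "3 dvd (h' r - h r)" by (rule dvd3_two)
    then obtain m where m: "h' r - h r = 3 * m" unfolding dvd_def by blast
    have hv: "h' v = h v + 3 * m" if "v \<in> V" for v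
    proof -
      have "d v = 2 * (h' v - h v)" using p(3) that unfolding d_def \<psi>_def by simp
      then have "2 * (h' v - h v) = 2 * (h' r - h r)" using dc[OF that] dr by simp
      then have "h' v - h v = h' r - h r" by simp
      then show ?thesis using m by simp
    qed
    have "l1norm V h' = l1norm V (\<lambda>v. h v + 3 * m)" unfolding l1norm_def
      by (rule sum.cong) (simp_all add: hv)
    moreover have "l1norm V h \<le> l1norm V (\<lambda>v. h v + 3 * m)" using bal unfolding balanced_def by blast
    ultimately have "l1norm V h \<le> int (length fs - 1)" using p(4) by linarith
    then show "enat (nat (l1norm V h)) \<le> enat (length fs - 1)" by simp
  qed
  moreover have "proper3 V E (col V \<phi>)" "proper3 V E (col V \<psi>)"
    using col_proper[OF tree hp] col_proper[OF tree hq] unfolding \<psi>_def by auto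
  ultimately show ?thesis by blast
qed



lemma sup_fin:
  fixes F :: "'b \<Rightarrow> enat"
  assumes "finite A" "\<forall>x\<in>A. F x \<noteq> \<infinity>"
  shows "(SUP x\<in>A. F x) \<noteq> \<infinity>"
proof (cases "A = {}")
  case True then show ?thesis by (simp add: bot_enat_def)
next
  case False
  have fi: "finite (F ` A)" "F ` A \<noteq> {}" using assms(1) False by auto
  then have "Sup (F ` A) = Max (F ` A)" unfolding Sup_enat_def by simp
  moreover have "Max (F ` A) \<in> F ` A" using fi by (rule Max_in)
  ultimately show ?thesis using assms(2) by auto
qed

theorem mainTheorem7:
  fixes V :: "'a set" and E :: "'a set set"
  assumes "is_tree V E"
  shows "cdiam V E = enat (nat (Max {l1norm V h | h. is_labeling E h \<and> balanced V h}))"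
proof -
  note tree = assms
  have fin: "finite V" using tree unfolding is_tree_def by blast
  define P where "P = {(f, g). proper3 V E f \<and> proper3 V E g}"
  define B where "B = {l1norm V h | h. is_labeling E h \<and> balanced V h}"
  have "P \<subseteq> (V \<rightarrow>\<^sub>E {0,1,2}) \<times> (V \<rightarrow>\<^sub>E {0,1,2})" unfolding P_def proper3_def by auto
  moreover have "finite ((V \<rightarrow>\<^sub>E {0::nat,1,2}) \<times> (V \<rightarrow>\<^sub>E {0::nat,1,2}))"
    using fin by (intro finite_cartesian_product finite_PiE) auto
  ultimately have finP: "finite P" by (rule finite_subset)
  have cdP: "\<forall>p\<in>P. cdist V E (fst p) (snd p) \<noteq> \<infinity>"
  proof
    fix p assume "p \<in> P"
    then obtain f g where p: "p = (f, g)" "proper3 V E f" "proper3 V E g" unfolding P_def by auto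
    obtain h where "cdist V E f g \<le> enat (nat (l1norm V h))" using UBmain[OF tree p(2,3)] by blast
    then have "cdist V E f g \<noteq> \<infinity>" by (metis infinity_ileE)
    then show "cdist V E (fst p) (snd p) \<noteq> \<infinity>" using p(1) by simp
  qed
  have "cdiam V E \<noteq> \<infinity>" unfolding cdiam_def P_def[symmetric] using sup_fin[OF finP cdP] .
  then obtain D where D: "cdiam V E = enat D" by (cases "cdiam V E") auto
  have Bb: "b \<in> {0..int D}" if bB: "b \<in> B" for b
  proof -
    obtain h where h: "b = l1norm V h" "is_labeling E h" "balanced V h" using bB unfolding B_def by blast
    obtain f g where fg: "proper3 V E f" "proper3 V E g" "enat (nat (l1norm V h)) \<le> cdist V E f g"
      using LBmain[OF tree h(2,3)] by blast
    have "(f, g) \<in> P" unfolding P_def using fg by simp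
    then have "cdist V E f g \<le> cdiam V E" unfolding cdiam_def P_def[symmetric]
      by (metis (no_types, lifting) SUP_upper fst_conv snd_conv)
    then have "nat b \<le> D" using fg(3) D h(1) by (metis enat_ord_simps(1) order_trans)
    then show ?thesis using h(1) l1_nonneg[of V h] by simp
  qed
  have finB: "finite B" using Bb by (meson finite_atLeastAtMost_int finite_subset subsetI)
  have "l1norm V (\<lambda>_. 0) = 0" unfolding l1norm_def by simp
  then have "0 \<in> B" unfolding B_def balanced_def is_labeling_def
    using l1_nonneg by (intro CollectI exI[of _ "\<lambda>_. 0::int"]) auto
  then have neB: "B \<noteq> {}" by blast
  have MB: "Max B \<in> B" using finB neB by (rule Max_in)
  have leM: "b \<le> Max B" if "b \<in> B" for b using finB that by simp
  have le1: "cdiam V E \<le> enat (nat (Max B))" unfolding cdiam_def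
  proof (rule SUP_least)
    fix p assume "p \<in> {(f, g). proper3 V E f \<and> proper3 V E g}"
    then obtain f g where p: "p = (f, g)" "proper3 V E f" "proper3 V E g" by auto
    obtain h where h: "is_labeling E h" "balanced V h" "cdist V E f g \<le> enat (nat (l1norm V h))"
      using UBmain[OF tree p(2,3)] by blast
    have "l1norm V h \<in> B" unfolding B_def using h by blast
    then have "l1norm V h \<le> Max B" by (rule leM)
    then have "nat (l1norm V h) \<le> nat (Max B)" by (rule nat_mono)
    then show "cdist V E (fst p) (snd p) \<le> enat (nat (Max B))" using h(3) p(1)
      by (metis enat_ord_simps(1) fst_conv snd_conv order_trans)
  qed
  have le2: "enat (nat (Max B)) \<le> cdiam V E"
  proof -
    obtain h where h: "Max B = l1norm V h" "is_labeling E h" "balanced V h" using MB unfolding B_def by blast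
    obtain f g where fg: "proper3 V E f" "proper3 V E g" "enat (nat (l1norm V h)) \<le> cdist V E f g"
      using LBmain[OF tree h(2,3)] by blast
    have "(f, g) \<in> P" unfolding P_def using fg by simp
    then have "cdist V E f g \<le> cdiam V E" unfolding cdiam_def P_def[symmetric]
      by (metis (no_types, lifting) SUP_upper fst_conv snd_conv)
    then show ?thesis using fg(3) h(1) by simp
  qed
  show ?thesis using le1 le2 unfolding B_def by simp
qed


end
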